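(* Consider Algorithm 1 applied to $\min\varphi(w)$ s.t. $w\in D$, assume the inner loop always terminates, and let $\{w^j\}$ be the resulting infinite sequence of outer iterates. Assume that $\varphi$ is bounded from below and uniformly continuous on $\mathcal S_\varphi(w^0):=\{w\in D:\varphi(w)\le\varphi(w^0)\}$. Let $\bar w$ be an accumulation point of $\{w^j\}$, with $w^j\to\bar w$ along a subsequence $K$. Then $\bar w$ is an M-stationary point of the problem, i.e., $0\in\nabla\varphi(\bar w)+\mathcal N^{\lim}_D(\bar w)$, and $\gamma_j(w^{j+1}-w^j)\to0$ as $j\to\infty$, $j\in K$.
   Context: $\mathbb W$ is a Euclidean space, $\varphi\colon\mathbb W\to\mathbb R$ continuously differentiable, $D\subset\mathbb W$ nonempty and closed (neither need be convex). The limiting normal cone at $\bar w\in D$ is $\mathcal N^{\lim}_D(\bar w):=\limsup_{w\to\bar w}\operatorname{cone}(w-\Pi_D(w))$ (outer set limit, $\Pi_D$ the multivalued Euclidean projection onto $D$). Algorithm 1 (general spectral gradient method, without termination test): parameters $\tau>1$, $\sigma\in(0,1)$, $0<\gamma_{\min}\le\gamma_{\max}<\infty$, $m\in\mathbb N$, starting point $w^0\in D$. For $j=0,1,2,\dots$: set $m_j:=\min(j,m)$ and choose $\gamma_j^0\in[\gamma_{\min},\gamma_{\max}]$; for $i=1,2,\dots$ set $\gamma_{j,i}:=\tau^{i-1}\gamma_j^0$ and compute a (global) solution $w^{j,i}$ of $\min_w \varphi(w^j)+\langle\nabla\varphi(w^j),w-w^j\rangle+\frac{\gamma_{j,i}}2\|w-w^j\|^2$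 s.t. $w\in D$ (subproblem $Q(j,i)$); the inner loop stops at the first $i$ with $\varphi(w^{j,i})\le\max_{r=0,\dots,m_j}\varphi(w^{j-r})+\sigma\langle\nabla\varphi(w^j),w^{j,i}-w^j\rangle$; then set $i_j:=i$, $\gamma_j:=\gamma_{j,i_j}$, $w^{j+1}:=w^{j,i_j}$. *)

theory Defs
  imports "HOL-Analysis.Analysis"
begin

definition proj_set :: "'a::euclidean_space set \<Rightarrow> 'a \<Rightarrow> 'a set" where
  "proj_set D w = {p \<in> D. \<forall>d\<in>D. dist w p \<le> dist w d}"

definition ray_cone :: "'a::real_vector set \<Rightarrow> 'a set" where
  "ray_cone S = {t *\<^sub>R s | t s. 0 \<le> t \<and> s \<in> S}"

text \<open>Limiting normal cone: outer (Painleve-Kuratowski) limit of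
  cone(w - Pi_D(w)) as w tends to wbar.\<close>
definition lim_normal_cone :: "'a::euclidean_space set \<Rightarrow> 'a \<Rightarrow> 'a set" where
  "lim_normal_cone D wbar =
     {v. \<exists>ws vs. ws \<longlonglongrightarrow> wbar \<and> vs \<longlonglongrightarrow> v \<and>
          (\<forall>k. vs k \<in> ray_cone ((\<lambda>p. ws k - p) ` proj_set D (ws k)))}"

definition subproblem_sol ::
  "('a::euclidean_space \<Rightarrow> real) \<Rightarrow> ('a \<Rightarrow> 'a) \<Rightarrow> 'a set \<Rightarrow> 'a \<Rightarrow> real \<Rightarrow> 'a \<Rightarrow> bool" where
  "subproblem_sol phi grad D wj gam x \<longleftrightarrow> x \<in> D \<and>
     (\<forall>y\<in>D. phi wj + grad wj \<bullet> (x - wj) + gam / 2 * (norm (x - wj))\<^sup>2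
              \<le> phi wj + grad wj \<bullet> (y - wj) + gam / 2 * (norm (y - wj))\<^sup>2)"

definition accept ::
  "('a::euclidean_space \<Rightarrow> real) \<Rightarrow> ('a \<Rightarrow> 'a) \<Rightarrow> nat \<Rightarrow> real \<Rightarrow> (nat \<Rightarrow> 'a) \<Rightarrow> nat \<Rightarrow> 'a \<Rightarrow> bool" where
  "accept phi grad m sig w j x \<longleftrightarrow>
     phi x \<le> Max ((\<lambda>r. phi (w (j - r))) ` {0..min j m}) + sig * (grad (w j) \<bullet> (x - w j))"

text \<open>Runs of Algorithm 1 (inner loop always terminating): outer iterates w,
  initial trial parameters gam0, inner iterates wi j i (for 1 <= i <= ii j),
  accepted inner index ii j, and accepted parameters gam j.\<close>
definition spg_run ::
  "('a::euclidean_space \<Rightarrow> real) \<Rightarrow> ('a \<Rightarrow> 'a) \<Rightarrow> 'a set \<Rightarrow> real \<Rightarrow> real \<Rightarrow> real \<Rightarrow> real \<Rightarrow> nat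
   \<Rightarrow> (nat \<Rightarrow> 'a) \<Rightarrow> (nat \<Rightarrow> real) \<Rightarrow> (nat \<Rightarrow> nat \<Rightarrow> 'a) \<Rightarrow> (nat \<Rightarrow> nat) \<Rightarrow> (nat \<Rightarrow> real) \<Rightarrow> bool" where
  "spg_run phi grad D tau sig gmin gmax m w gam0 wi ii gam \<longleftrightarrow>
     w 0 \<in> D \<and>
     (\<forall>j. gmin \<le> gam0 j \<and> gam0 j \<le> gmax) \<and>
     (\<forall>j. 1 \<le> ii j) \<and>
     (\<forall>j i. 1 \<le> i \<and> i \<le> ii j \<longrightarrow> subproblem_sol phi grad D (w j) (tau ^ (i - 1) * gam0 j) (wi j i)) \<and>
     (\<forall>j i. 1 \<le> i \<and> i < ii j \<longrightarrow> \<not> accept phi grad m sig w j (wi j i)) \<and>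
     (\<forall>j. accept phi grad m sig w j (wi j (ii j))) \<and>
     (\<forall>j. gam j = tau ^ (ii j - 1) * gam0 j) \<and>
     (\<forall>j. w (Suc j) = wi j (ii j))"

end

theory Submission
  imports Defs
begin


lemma sub_self:
  assumes "subproblem_sol phi grad D wj gam x" "wj \<in> D"
  shows "grad wj \<bullet> (x - wj) + gam / 2 * (norm (x - wj))\<^sup>2 \<le> 0"
proof -
  have "phi wj + grad wj \<bullet> (x - wj) + gam / 2 * (norm (x - wj))\<^sup>2
              \<le> phi wj + grad wj \<bullet> (wj - wj) + gam / 2 * (norm (wj - wj))\<^sup>2"
    using assms unfolding subproblem_sol_def by blast
  thus ?thesis by simp
qed

lemma sub_in: "subproblem_sol phi grad D wj gam x \<Longrightarrow> x \<in> D"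
  unfolding subproblem_sol_def by blast

lemma sub_cmp:
  assumes "subproblem_sol phi grad D wj gam x" "y \<in> D"
  shows "grad wj \<bullet> (x - wj) + gam / 2 * (norm (x - wj))\<^sup>2 \<le> grad wj \<bullet> (y - wj) + gam / 2 * (norm (y - wj))\<^sup>2"
proof -
  have "phi wj + grad wj \<bullet> (x - wj) + gam / 2 * (norm (x - wj))\<^sup>2
              \<le> phi wj + grad wj \<bullet> (y - wj) + gam / 2 * (norm (y - wj))\<^sup>2"
    using assms unfolding subproblem_sol_def by blast
  thus ?thesis by simp
qed

lemma norm_id:
  fixes w g y :: "'a::euclidean_space"
  assumes "gam > 0"
  shows "(norm (w - (1/gam) *\<^sub>R g - y))\<^sup>2 = (2/gam)*(g \<bullet> (y-w) + gam/2*(norm (y-w))\<^sup>2) + (norm g)\<^sup>2/gam\<^sup>2"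
proof -
  define u where "u = w - y"
  have "w - (1/gam) *\<^sub>R g - y = u - (1/gam) *\<^sub>R g" by (simp add: u_def algebra_simps)
  hence "(norm (w - (1/gam) *\<^sub>R g - y))\<^sup>2 = (u - (1/gam) *\<^sub>R g) \<bullet> (u - (1/gam) *\<^sub>R g)"
    by (metis power2_norm_eq_inner)
  also have "\<dots> = u \<bullet> u - 2*(1/gam)*(u \<bullet> g) + (1/gam)\<^sup>2 * (g \<bullet> g)"
    by (simp add: inner_diff_left inner_diff_right inner_commute power2_eq_square algebra_simps)
  also have "u \<bullet> u = (norm (y-w))\<^sup>2" by (simp add: u_def power2_norm_eq_inner inner_diff_left inner_diff_right inner_commute)
  also have "u \<bullet> g = - (g \<bullet> (y-w))" by (simp add: u_def inner_commute inner_diff_left inner_diff_right)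
  also have "g \<bullet> g = (norm g)\<^sup>2" by (simp add: power2_norm_eq_inner)
  finally show ?thesis using assms by (simp add: field_simps power2_eq_square)
qed

lemma sub_proj:
  assumes "subproblem_sol phi grad D wj gam x" "gam > 0"
  shows "x \<in> proj_set D (wj - (1/gam) *\<^sub>R grad wj)"
proof -
  have xD: "x \<in> D" using sub_in[OF assms(1)] .
  { fix y assume y: "y \<in> D"
    have le: "grad wj \<bullet> (x - wj) + gam / 2 * (norm (x - wj))\<^sup>2 \<le> grad wj \<bullet> (y - wj) + gam / 2 * (norm (y - wj))\<^sup>2"
      using sub_cmp[OF assms(1) y] .
    have c0: "0 \<le> 2/gam" using assms(2) by simp
    have le2: "(2/gam) * (grad wj \<bullet> (x - wj) + gam / 2 * (norm (x - wj))\<^sup>2) \<le> (2/gam) * (grad wj \<bullet> (y - wj) + gam / 2 * (norm (y - wj))\<^sup>2)"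
      using mult_left_mono[OF le c0] .
    have ex: "(norm (wj - (1/gam) *\<^sub>R grad wj - x))\<^sup>2 = (2/gam)*(grad wj \<bullet> (x-wj) + gam/2*(norm (x-wj))\<^sup>2) + (norm (grad wj))\<^sup>2/gam\<^sup>2"
      by (rule norm_id[OF assms(2)])
    have ey: "(norm (wj - (1/gam) *\<^sub>R grad wj - y))\<^sup>2 = (2/gam)*(grad wj \<bullet> (y-wj) + gam/2*(norm (y-wj))\<^sup>2) + (norm (grad wj))\<^sup>2/gam\<^sup>2"
      by (rule norm_id[OF assms(2)])
    have "(norm (wj - (1/gam) *\<^sub>R grad wj - x))\<^sup>2 \<le> (norm (wj - (1/gam) *\<^sub>R grad wj - y))\<^sup>2"
      unfolding ex ey using le2 by linarith
    hence "norm (wj - (1/gam) *\<^sub>R grad wj - x) \<le> norm (wj - (1/gam) *\<^sub>R grad wj - y)"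
      by (rule power2_le_imp_le) simp
    hence "dist (wj - (1/gam) *\<^sub>R grad wj) x \<le> dist (wj - (1/gam) *\<^sub>R grad wj) y"
      by (simp add: dist_norm) }
  thus ?thesis using xD unfolding proj_set_def by blast
qed

lemma proj_shrink:
  assumes "p \<in> proj_set D z" "0 \<le> t" "t \<le> 1"
  shows "p \<in> proj_set D (p + t *\<^sub>R (z - p))"
proof -
  have pD: "p \<in> D" and m: "\<forall>d\<in>D. dist z p \<le> dist z d" using assms(1) unfolding proj_set_def by auto
  { fix d assume d: "d \<in> D"
    have e1: "dist (p + t *\<^sub>R (z - p)) p = t * dist z p"
      using assms(2) by (simp add: dist_norm)
    have e2: "dist z (p + t *\<^sub>R (z - p)) = (1 - t) * dist z p"
    proof -
      have "z - (p + t *\<^sub>R (z - p)) = (1 - t) *\<^sub>R (z - p)" by (simp add: algebra_simps)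
      thus ?thesis using assms(3) by (simp add: dist_norm)
    qed
    have "dist z d \<le> dist z (p + t *\<^sub>R (z - p)) + dist (p + t *\<^sub>R (z - p)) d" by (rule dist_triangle)
    moreover have "dist z p \<le> dist z d" using m d by blast
    ultimately have "dist (p + t *\<^sub>R (z - p)) p \<le> dist (p + t *\<^sub>R (z - p)) d"
      using e1 e2 by (simp add: left_diff_distrib) }
  thus ?thesis using pD unfolding proj_set_def by blast
qed

lemma sub_compare:
  assumes "subproblem_sol phi grad D wj g1 x1" "subproblem_sol phi grad D wj g2 x2" "g1 < g2"
  shows "norm (x2 - wj) \<le> norm (x1 - wj)"
proof -
  have x1: "x1 \<in> D" "x2 \<in> D" using sub_in[OF assms(1)] sub_in[OF assms(2)] by auto
  have a: "grad wj \<bullet> (x1 - wj) + g1 / 2 * (norm (x1 - wj))\<^sup>2 \<le> grad wj \<bullet> (x2 - wj) + g1 / 2 * (norm (x2 - wj))\<^sup>2"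
    using sub_cmp[OF assms(1) x1(2)] .
  have b: "grad wj \<bullet> (x2 - wj) + g2 / 2 * (norm (x2 - wj))\<^sup>2 \<le> grad wj \<bullet> (x1 - wj) + g2 / 2 * (norm (x1 - wj))\<^sup>2"
    using sub_cmp[OF assms(2) x1(1)] .
  from a b have "(g2 - g1) * (norm (x2 - wj))\<^sup>2 \<le> (g2 - g1) * (norm (x1 - wj))\<^sup>2"
    by (simp add: algebra_simps)
  hence "(norm (x2 - wj))\<^sup>2 \<le> (norm (x1 - wj))\<^sup>2" using assms(3) by simp
  thus ?thesis by (rule power2_le_imp_le) simp
qed

lemma onorm_inner_le: "onorm (\<lambda>h. (v::'a::real_inner) \<bullet> h) \<le> norm v"
  by (rule onorm_bound) (auto simp: Cauchy_Schwarz_ineq2)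

lemma lin_bound:
  fixes phi :: "'a::euclidean_space \<Rightarrow> real"
  assumes deriv: "\<And>x. (phi has_derivative (\<lambda>h. grad x \<bullet> h)) (at x)"
    and B: "\<And>\<xi>. \<xi> \<in> cball a \<rho> \<Longrightarrow> norm (grad \<xi> - grad a) \<le> B"
    and ba: "norm (b - a) \<le> \<rho>"
  shows "\<bar>phi b - phi a - grad a \<bullet> (b - a)\<bar> \<le> norm (b - a) * B"
proof -
  have "norm (phi b - phi a - (\<lambda>h. grad a \<bullet> h) (b - a)) \<le> norm (b - a) * B"
  proof (rule differentiable_bound_linearization[where S="cball a \<rho>" and f'="\<lambda>x h. grad x \<bullet> h"])
    fix t :: real assume t: "t \<in> {0..1}"
    have "dist a (a + t *\<^sub>R (b - a)) = t * norm (b - a)" using t by (simp add: dist_norm)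
    also have "\<dots> \<le> \<rho>" using t ba by (metis atLeastAtMost_iff mult_le_one norm_ge_zero order_trans mult_left_le_one_le)
    finally show "a + t *\<^sub>R (b - a) \<in> cball a \<rho>" by simp
  next
    fix x show "(phi has_derivative (\<lambda>h. grad x \<bullet> h)) (at x within cball a \<rho>)"
      using deriv has_derivative_at_withinI by blast
  next
    fix x assume x: "x \<in> cball a \<rho>"
    have "(\<lambda>h. grad x \<bullet> h) - (\<lambda>h. grad a \<bullet> h) = (\<lambda>h. (grad x - grad a) \<bullet> h)"
      by (rule ext) (simp add: inner_diff_left)
    thus "onorm ((\<lambda>h. grad x \<bullet> h) - (\<lambda>h. grad a \<bullet> h)) \<le> B"
      using onorm_inner_le[of "grad x - grad a"] B[OF x] by simp
  next
    have "0 \<le> \<rho>" using ba norm_ge_zero[of "b-a"] by linarith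
    thus "a \<in> cball a \<rho>" by simp
  qed
  thus ?thesis by simp
qed



lemma part1:
  fixes phi :: "'a::euclidean_space \<Rightarrow> real" and grad :: "'a \<Rightarrow> 'a"
    and D :: "'a set" and tau sig gmin gmax :: real and m :: nat
    and w :: "nat \<Rightarrow> 'a" and gam0 :: "nat \<Rightarrow> real" and wi :: "nat \<Rightarrow> nat \<Rightarrow> 'a"
    and ii :: "nat \<Rightarrow> nat" and gam :: "nat \<Rightarrow> real"
    and K :: "nat \<Rightarrow> nat" and wbar :: 'a
  assumes deriv: "\<And>x. (phi has_derivative (\<lambda>h. grad x \<bullet> h)) (at x)"
    and grad_cont: "continuous_on UNIV grad"
    and D_ne: "D \<noteq> {}" and D_closed: "closed D"
    and tau: "tau > 1" and sig: "0 < sig" "sig < 1"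
    and gam_bounds: "0 < gmin" "gmin \<le> gmax"
    and run: "spg_run phi grad D tau sig gmin gmax m w gam0 wi ii gam"
    and bdd: "\<exists>c. \<forall>x\<in>{x\<in>D. phi x \<le> phi (w 0)}. c \<le> phi x"
    and unif: "uniformly_continuous_on {x\<in>D. phi x \<le> phi (w 0)} phi"
    and K: "strict_mono K" and conv: "(w \<circ> K) \<longlonglongrightarrow> wbar"
  shows "(\<lambda>j. w (Suc j) - w j) \<longlonglongrightarrow> 0"
proof -
  have w0D: "w 0 \<in> D" and gam0b: "\<And>j. gmin \<le> gam0 j \<and> gam0 j \<le> gmax"
    and ii1: "\<And>j. 1 \<le> ii j"
    and sols: "\<And>j i. 1 \<le> i \<Longrightarrow> i \<le> ii j \<Longrightarrow> subproblem_sol phi grad D (w j) (tau ^ (i - 1) * gam0 j) (wi j i)"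
    and nacc: "\<And>j i. 1 \<le> i \<Longrightarrow> i < ii j \<Longrightarrow> \<not> accept phi grad m sig w j (wi j i)"
    and acc: "\<And>j. accept phi grad m sig w j (wi j (ii j))"
    and gamdef: "\<And>j. gam j = tau ^ (ii j - 1) * gam0 j"
    and wsuc: "\<And>j. w (Suc j) = wi j (ii j)"
    using run unfolding spg_run_def by auto
  define Phi where "Phi j = Max ((\<lambda>r. phi (w (j - r))) ` {0..min j m})" for j
  define d where "d j = w (Suc j) - w j" for j
  define c where "c = sig * gmin / 2"
  have c_pos: "c > 0" using sig gam_bounds by (simp add: c_def)
  have taupow: "\<And>n. 1 \<le> tau ^ n" using tau by (simp add: one_le_power)
  have gam_ge: "\<And>j. gmin \<le> gam j"
  proof -
    fix j
    have "1 * gmin \<le> tau ^ (ii j - 1) * gam0 j"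
    proof (rule mult_mono)
      show "1 \<le> tau ^ (ii j - 1)" by (rule taupow)
      show "gmin \<le> gam0 j" using gam0b[of j] by blast
      show "0 \<le> tau ^ (ii j - 1)" using taupow[of "ii j - 1"] by linarith
      show "0 \<le> gmin" using gam_bounds by linarith
    qed
    thus "gmin \<le> gam j" using gamdef[of j] by simp
  qed
  have gam_pos: "\<And>j. 0 < gam j"
  proof -
    fix j show "0 < gam j" using gam_ge[of j] gam_bounds by linarith
  qed
  have solj: "\<And>j. subproblem_sol phi grad D (w j) (gam j) (w (Suc j))"
  proof -
    fix j
    have "subproblem_sol phi grad D (w j) (tau ^ (ii j - 1) * gam0 j) (wi j (ii j))"
      using sols[of "ii j" j] ii1[of j] by blast
    thus "subproblem_sol phi grad D (w j) (gam j) (w (Suc j))" by (simp only: gamdef wsuc)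
  qed
  have wD: "\<And>j. w j \<in> D"
  proof -
    fix j show "w j \<in> D"
    proof (cases j)
      case 0 thus ?thesis using w0D by simp
    next
      case (Suc k) thus ?thesis using sub_in[OF solj[of k]] by simp
    qed
  qed
  have desc: "\<And>j. grad (w j) \<bullet> d j \<le> - (gmin/2) * (norm (d j))\<^sup>2"
  proof -
    fix j
    have "grad (w j) \<bullet> d j + gam j / 2 * (norm (d j))\<^sup>2 \<le> 0"
      using sub_self[OF solj wD] by (simp add: d_def)
    moreover have "gmin / 2 * (norm (d j))\<^sup>2 \<le> gam j / 2 * (norm (d j))\<^sup>2"
      using gam_ge[of j] by (intro mult_right_mono) auto
    ultimately show "grad (w j) \<bullet> d j \<le> - (gmin/2) * (norm (d j))\<^sup>2" by linarith
  qed
  have accj: "\<And>j. phi (w (Suc j)) \<le> Phi j + sig * (grad (w j) \<bullet> d j)"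
    using acc wsuc unfolding accept_def Phi_def d_def by simp
  have suff: "\<And>j. phi (w (Suc j)) \<le> Phi j - c * (norm (d j))\<^sup>2"
  proof -
    fix j
    have "sig * (grad (w j) \<bullet> d j) \<le> sig * (- (gmin/2) * (norm (d j))\<^sup>2)"
      using desc[of j] sig by (intro mult_left_mono) auto
    thus "phi (w (Suc j)) \<le> Phi j - c * (norm (d j))\<^sup>2" using accj[of j] by (simp add: c_def)
  qed
  have finW: "\<And>j. finite ((\<lambda>r. phi (w (j - r))) ` {0..min j m})" by simp
  have neW: "\<And>j. (\<lambda>r. phi (w (j - r))) ` {0..min j m} \<noteq> {}" by simp
  have phi_le_Phi: "\<And>j. phi (w j) \<le> Phi j"
  proof -
    fix j
    have "phi (w (j - 0)) \<in> (\<lambda>r. phi (w (j - r))) ` {0..min j m}" by force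
    thus "phi (w j) \<le> Phi j" unfolding Phi_def using finW by (metis Max_ge minus_nat.diff_0)
  qed
  have Phi_att: "\<And>j. \<exists>i. j - m \<le> i \<and> i \<le> j \<and> phi (w i) = Phi j"
  proof -
    fix j
    have "Phi j \<in> (\<lambda>r. phi (w (j - r))) ` {0..min j m}" unfolding Phi_def using finW neW by (rule Max_in)
    then obtain r where "r \<in> {0..min j m}" "Phi j = phi (w (j - r))" by blast
    thus "\<exists>i. j - m \<le> i \<and> i \<le> j \<and> phi (w i) = Phi j" by (intro exI[of _ "j - r"]) auto
  qed
  have Phi_dec1: "\<And>j. Phi (Suc j) \<le> Phi j"
  proof -
    fix j
    have "\<forall>y \<in> (\<lambda>r. phi (w (Suc j - r))) ` {0..min (Suc j) m}. y \<le> Phi j"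
    proof
      fix y assume "y \<in> (\<lambda>r. phi (w (Suc j - r))) ` {0..min (Suc j) m}"
      then obtain r where r: "r \<le> min (Suc j) m" "y = phi (w (Suc j - r))" by auto
      show "y \<le> Phi j"
      proof (cases r)
        case 0
        have "0 \<le> c * (norm (d j))\<^sup>2" using c_pos by simp
        moreover have "y = phi (w (Suc j))" using r 0 by simp
        ultimately show ?thesis using suff[of j] by linarith
      next
        case (Suc r')
        hence "y \<in> (\<lambda>r. phi (w (j - r))) ` {0..min j m}" using r by force
        thus ?thesis unfolding Phi_def by (rule Max_ge[OF finW])
      qed
    qed
    thus "Phi (Suc j) \<le> Phi j" unfolding Phi_def[of "Suc j"] using finW neW by (simp add: Max_le_iff)
  qed
  have decPhi: "decseq Phi" using Phi_dec1 by (simp add: decseq_SucI)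
  have Phi0: "Phi 0 = phi (w 0)" by (simp add: Phi_def)
  have lev: "\<And>j. w j \<in> {x\<in>D. phi x \<le> phi (w 0)}"
  proof -
    fix j
    have "Phi j \<le> Phi 0" using decPhi by (simp add: decseqD)
    thus "w j \<in> {x\<in>D. phi x \<le> phi (w 0)}" using wD[of j] phi_le_Phi[of j] Phi0 by simp
  qed
  obtain c0 where c0: "\<And>x. x \<in> {x\<in>D. phi x \<le> phi (w 0)} \<Longrightarrow> c0 \<le> phi x" using bdd by blast
  have "\<forall>i. c0 \<le> Phi i" using c0[OF lev] phi_le_Phi by (meson order_trans)
  then obtain L where PhiL: "Phi \<longlonglongrightarrow> L" and LPhi: "\<And>i. L \<le> Phi i"
    using decseq_convergent[OF decPhi] by blast
  have PhiT: "\<And>t. (\<And>j. j \<le> t j) \<Longrightarrow> (\<lambda>j. Phi (t j)) \<longlonglongrightarrow> L"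
  proof -
    fix t :: "nat \<Rightarrow> nat" assume tj: "\<And>j. j \<le> t j"
    show "(\<lambda>j. Phi (t j)) \<longlonglongrightarrow> L"
    proof (rule tendsto_sandwich[OF _ _ tendsto_const PhiL])
      show "\<forall>\<^sub>F n in sequentially. L \<le> Phi (t n)" using LPhi by simp
      show "\<forall>\<^sub>F n in sequentially. Phi (t n) \<le> Phi n" using decPhi tj by (simp add: decseqD)
    qed
  qed
  have key: "\<And>t. (\<And>j. j \<le> t j) \<Longrightarrow> (\<lambda>j. phi (w (Suc (t j)))) \<longlonglongrightarrow> L \<Longrightarrow>
      (\<lambda>j. d (t j)) \<longlonglongrightarrow> 0 \<and> (\<lambda>j. phi (w (t j))) \<longlonglongrightarrow> L"
  proof -
    fix t :: "nat \<Rightarrow> nat" assume tj: "\<And>j. j \<le> t j" and sL: "(\<lambda>j. phi (w (Suc (t j)))) \<longlonglongrightarrow> L"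
    have lim0: "(\<lambda>j. (Phi (t j) - phi (w (Suc (t j)))) / c) \<longlonglongrightarrow> (L - L) / c"
      by (intro tendsto_intros PhiT tj sL) (use c_pos in simp)
    have sq: "(\<lambda>j. (norm (d (t j)))\<^sup>2) \<longlonglongrightarrow> 0"
    proof (rule tendsto_sandwich[OF _ _ tendsto_const lim0[simplified]])
      show "\<forall>\<^sub>F n in sequentially. 0 \<le> (norm (d (t n)))\<^sup>2" by simp
      show "\<forall>\<^sub>F n in sequentially. (norm (d (t n)))\<^sup>2 \<le> (Phi (t n) - phi (w (Suc (t n)))) / c"
      proof (rule always_eventually, rule allI)
        fix n
        have "c * (norm (d (t n)))\<^sup>2 \<le> Phi (t n) - phi (w (Suc (t n)))" using suff[of "t n"] by linarith
        thus "(norm (d (t n)))\<^sup>2 \<le> (Phi (t n) - phi (w (Suc (t n)))) / c"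
          using c_pos by (simp add: pos_le_divide_eq mult.commute)
      qed
    qed
    have "(\<lambda>j. sqrt ((norm (d (t j)))\<^sup>2)) \<longlonglongrightarrow> sqrt 0" by (rule tendsto_real_sqrt[OF sq])
    hence nd: "(\<lambda>j. norm (d (t j))) \<longlonglongrightarrow> 0" by simp
    hence dt: "(\<lambda>j. d (t j)) \<longlonglongrightarrow> 0" by (rule tendsto_norm_zero_cancel)
    have diff: "(\<lambda>j. phi (w (t j)) - phi (w (Suc (t j)))) \<longlonglongrightarrow> 0"
    proof (rule LIMSEQ_I)
      fix e :: real assume e: "0 < e"
      have "\<exists>\<delta>>0. \<forall>x\<in>{x\<in>D. phi x \<le> phi (w 0)}. \<forall>x'\<in>{x\<in>D. phi x \<le> phi (w 0)}. dist x' x < \<delta> \<longrightarrow> dist (phi x') (phi x) < e"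
        using unif e unfolding uniformly_continuous_on_def by blast
      then obtain \<delta> where \<delta>: "\<delta> > 0" and U: "\<And>x x'. x \<in> {x\<in>D. phi x \<le> phi (w 0)} \<Longrightarrow> x' \<in> {x\<in>D. phi x \<le> phi (w 0)} \<Longrightarrow> dist x' x < \<delta> \<Longrightarrow> dist (phi x') (phi x) < e"
        by blast
      obtain no where no: "\<And>n. n \<ge> no \<Longrightarrow> norm (norm (d (t n)) - 0) < \<delta>" using LIMSEQ_D[OF nd \<delta>] by blast
      show "\<exists>no. \<forall>n\<ge>no. norm (phi (w (t n)) - phi (w (Suc (t n))) - 0) < e"
      proof (intro exI allI impI)
        fix n assume "n \<ge> no"
        hence "dist (w (t n)) (w (Suc (t n))) < \<delta>" using no by (simp add: d_def dist_norm norm_minus_commute)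
        hence "dist (phi (w (t n))) (phi (w (Suc (t n)))) < e" using U lev by blast
        thus "norm (phi (w (t n)) - phi (w (Suc (t n))) - 0) < e" by (simp add: dist_norm)
      qed
    qed
    have "(\<lambda>j. (phi (w (t j)) - phi (w (Suc (t j)))) + phi (w (Suc (t j)))) \<longlonglongrightarrow> 0 + L"
      by (rule tendsto_add[OF diff sL])
    thus "(\<lambda>j. d (t j)) \<longlonglongrightarrow> 0 \<and> (\<lambda>j. phi (w (t j))) \<longlonglongrightarrow> L" using dt by simp
  qed
  have "\<forall>n. \<exists>i. n - m \<le> i \<and> i \<le> n \<and> phi (w i) = Phi n" using Phi_att by blast
  from choice[OF this] obtain l where l0: "\<forall>n. n - m \<le> l n \<and> l n \<le> n \<and> phi (w (l n)) = Phi n" by blast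
  have l: "\<And>n. n - m \<le> l n \<and> l n \<le> n \<and> phi (w (l n)) = Phi n" using l0 by blast
  define N where "N = Suc m"
  define h where "h j = l (j + 2 * N)" for j
  have hlo: "\<And>j. j + N + 1 \<le> h j"
  proof -
    fix j
    have "j + 2 * N - m \<le> h j" using l[of "j + 2 * N"] unfolding h_def by blast
    thus "j + N + 1 \<le> h j" unfolding N_def by simp
  qed
  have hhi: "\<And>j. h j \<le> j + 2 * N" using l unfolding h_def by blast
  have hphi: "\<And>j. phi (w (h j)) = Phi (j + 2 * N)" using l unfolding h_def by blast
  have C: "\<And>r. r \<le> N \<Longrightarrow> (\<lambda>j. phi (w (h j - r))) \<longlonglongrightarrow> L"
  proof -
    fix r show "r \<le> N \<Longrightarrow> (\<lambda>j. phi (w (h j - r))) \<longlonglongrightarrow> L"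
    proof (induction r)
      case 0
      show ?case using hphi PhiT[of "\<lambda>j. j + 2 * N"] by simp
    next
      case (Suc r)
      have tj: "\<And>j. j \<le> h j - Suc r"
      proof -
        fix j show "j \<le> h j - Suc r" using hlo[of j] Suc.prems by linarith
      qed
      have eq: "\<And>j. Suc (h j - Suc r) = h j - r"
      proof -
        fix j show "Suc (h j - Suc r) = h j - r" using hlo[of j] Suc.prems by linarith
      qed
      have "(\<lambda>j. phi (w (Suc (h j - Suc r)))) \<longlonglongrightarrow> L" using Suc eq by simp
      thus ?case using key[of "\<lambda>j. h j - Suc r", OF tj] by blast
    qed
  qed
  have wN: "(\<lambda>j. phi (w (j + N))) \<longlonglongrightarrow> L"
  proof -
    have g0: "(\<lambda>j. \<Sum>r\<in>{..N}. \<bar>phi (w (h j - r)) - L\<bar>) \<longlonglongrightarrow> (\<Sum>r\<in>{..N}. 0)"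
    proof (rule tendsto_sum)
      fix r assume "r \<in> {..N}"
      hence "(\<lambda>j. phi (w (h j - r)) - L) \<longlonglongrightarrow> L - L" using C by (intro tendsto_intros) auto
      thus "(\<lambda>j. \<bar>phi (w (h j - r)) - L\<bar>) \<longlonglongrightarrow> 0" using tendsto_rabs_zero by fastforce
    qed
    have "(\<lambda>j. phi (w (j + N)) - L) \<longlonglongrightarrow> 0"
    proof (rule Lim_null_comparison[OF _ g0[simplified]])
      show "\<forall>\<^sub>F j in sequentially. norm (phi (w (j + N)) - L) \<le> (\<Sum>r\<in>{..N}. \<bar>phi (w (h j - r)) - L\<bar>)"
      proof (rule always_eventually, rule allI)
        fix j
        define r0 where "r0 = h j - (j + N)"
        have r0N: "r0 \<in> {..N}" using hhi[of j] unfolding r0_def by auto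
        have "h j - r0 = j + N" using hlo[of j] unfolding r0_def by simp
        hence "norm (phi (w (j + N)) - L) = \<bar>phi (w (h j - r0)) - L\<bar>" by simp
        also have "\<dots> \<le> (\<Sum>r\<in>{..N}. \<bar>phi (w (h j - r)) - L\<bar>)"
          by (rule member_le_sum[OF r0N]) auto
        finally show "norm (phi (w (j + N)) - L) \<le> (\<Sum>r\<in>{..N}. \<bar>phi (w (h j - r)) - L\<bar>)" .
      qed
    qed
    hence "(\<lambda>j. (phi (w (j + N)) - L) + L) \<longlonglongrightarrow> 0 + L" by (intro tendsto_intros)
    thus ?thesis by simp
  qed
  have phiL: "(\<lambda>j. phi (w j)) \<longlonglongrightarrow> L" using LIMSEQ_offset[OF wN] .
  have "(\<lambda>j. phi (w (Suc j))) \<longlonglongrightarrow> L" using LIMSEQ_Suc[OF phiL] .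
  hence dlim: "d \<longlonglongrightarrow> 0" using key[of "\<lambda>j. j"] by simp
  have "d = (\<lambda>j. w (Suc j) - w j)" by (rule ext) (simp add: d_def)
  thus ?thesis using dlim by simp
qed



lemma part2:
  fixes phi :: "'a::euclidean_space \<Rightarrow> real" and grad :: "'a \<Rightarrow> 'a"
    and D :: "'a set" and tau sig gmin gmax :: real and m :: nat
    and w :: "nat \<Rightarrow> 'a" and gam0 :: "nat \<Rightarrow> real" and wi :: "nat \<Rightarrow> nat \<Rightarrow> 'a"
    and ii :: "nat \<Rightarrow> nat" and gam :: "nat \<Rightarrow> real"
    and K :: "nat \<Rightarrow> nat" and wbar :: 'a
  assumes deriv: "\<And>x. (phi has_derivative (\<lambda>h. grad x \<bullet> h)) (at x)"
    and grad_cont: "continuous_on UNIV grad"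
    and tau: "tau > 1" and sig: "0 < sig" "sig < 1"
    and gam_bounds: "0 < gmin" "gmin \<le> gmax"
    and run: "spg_run phi grad D tau sig gmin gmax m w gam0 wi ii gam"
    and K: "strict_mono K" and conv: "(w \<circ> K) \<longlonglongrightarrow> wbar"
    and dlim: "(\<lambda>j. w (Suc j) - w j) \<longlonglongrightarrow> 0"
  shows "(\<exists>v\<in>lim_normal_cone D wbar. grad wbar + v = 0) \<and>
         ((\<lambda>k. gam (K k) *\<^sub>R (w (Suc (K k)) - w (K k))) \<longlonglongrightarrow> 0)"
proof -
  have w0D: "w 0 \<in> D" and gam0b: "\<And>j. gmin \<le> gam0 j \<and> gam0 j \<le> gmax"
    and ii1: "\<And>j. 1 \<le> ii j"
    and sols: "\<And>j i. 1 \<le> i \<Longrightarrow> i \<le> ii j \<Longrightarrow> subproblem_sol phi grad D (w j) (tau ^ (i - 1) * gam0 j) (wi j i)"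
    and nacc: "\<And>j i. 1 \<le> i \<Longrightarrow> i < ii j \<Longrightarrow> \<not> accept phi grad m sig w j (wi j i)"
    and gamdef: "\<And>j. gam j = tau ^ (ii j - 1) * gam0 j"
    and wsuc: "\<And>j. w (Suc j) = wi j (ii j)"
    using run unfolding spg_run_def by auto
  have taupow: "\<And>n. 1 \<le> tau ^ n" using tau by (simp add: one_le_power)
  have gam_ge: "\<And>j. gmin \<le> gam j"
  proof -
    fix j
    have "1 * gmin \<le> tau ^ (ii j - 1) * gam0 j"
    proof (rule mult_mono)
      show "1 \<le> tau ^ (ii j - 1)" by (rule taupow)
      show "gmin \<le> gam0 j" using gam0b[of j] by blast
      show "0 \<le> tau ^ (ii j - 1)" using taupow[of "ii j - 1"] by linarith
      show "0 \<le> gmin" using gam_bounds by linarith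
    qed
    thus "gmin \<le> gam j" using gamdef[of j] by simp
  qed
  have gam_pos: "\<And>j. 0 < gam j"
  proof -
    fix j show "0 < gam j" using gam_ge[of j] gam_bounds by linarith
  qed
  have solj: "\<And>j. subproblem_sol phi grad D (w j) (gam j) (w (Suc j))"
  proof -
    fix j
    have "subproblem_sol phi grad D (w j) (tau ^ (ii j - 1) * gam0 j) (wi j (ii j))"
      using sols[of "ii j" j] ii1[of j] by blast
    thus "subproblem_sol phi grad D (w j) (gam j) (w (Suc j))" by (simp only: gamdef wsuc)
  qed
  have wD: "\<And>j. w j \<in> D"
  proof -
    fix j show "w j \<in> D"
    proof (cases j)
      case 0 thus ?thesis using w0D by simp
    next
      case (Suc k) thus ?thesis using sub_in[OF solj[of k]] by simp
    qed
  qed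
  have wK: "(\<lambda>k. w (K k)) \<longlonglongrightarrow> wbar" using conv by (simp add: o_def)
  have dK: "(\<lambda>k. w (Suc (K k)) - w (K k)) \<longlonglongrightarrow> 0" using LIMSEQ_subseq_LIMSEQ[OF dlim K] by (simp add: o_def)
  have isc: "isCont grad wbar" using grad_cont by (simp add: continuous_on_eq_continuous_at)
  have gK: "(\<lambda>k. grad (w (K k))) \<longlonglongrightarrow> grad wbar" using isCont_tendsto_compose[OF isc wK] .
  have G3: "(\<lambda>k. gam (K k) *\<^sub>R (w (Suc (K k)) - w (K k))) \<longlonglongrightarrow> 0"
  proof (rule LIMSEQ_I)
    fix \<epsilon> :: real assume \<epsilon>: "0 < \<epsilon>"
    have "Bseq (\<lambda>k. grad (w (K k)))" by (rule convergent_imp_Bseq[OF convergentI[OF gK]])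
    then obtain G where G: "G > 0" "\<And>k. norm (grad (w (K k))) \<le> G" unfolding Bseq_def by blast
    have uc: "uniformly_continuous_on (cball wbar 2) grad"
      by (rule compact_uniformly_continuous[OF continuous_on_subset[OF grad_cont]]) auto
    define e' where "e' = \<epsilon> * (1 - sig) / (4 * tau)"
    have e': "e' > 0" using \<epsilon> sig tau by (simp add: e'_def)
    have "\<exists>\<delta>>0. \<forall>x\<in>cball wbar 2. \<forall>x'\<in>cball wbar 2. dist x' x < \<delta> \<longrightarrow> dist (grad x') (grad x) < e'"
      using uc e' unfolding uniformly_continuous_on_def by blast
    then obtain \<delta> where \<delta>: "\<delta> > 0" and Ug: "\<And>x x'. x \<in> cball wbar 2 \<Longrightarrow> x' \<in> cball wbar 2 \<Longrightarrow> dist x' x < \<delta> \<Longrightarrow> dist (grad x') (grad x) < e'"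
      by blast
    define \<rho> where "\<rho> = min (\<delta>/2) 1"
    have \<rho>: "\<rho> > 0" "\<rho> \<le> 1" "\<rho> < \<delta>" using \<delta> by (auto simp: \<rho>_def)
    define M where "M = max gmax (2*G/\<rho>)"
    have M: "M > 0" "gmax \<le> M" "2*G/\<rho> \<le> M" using gam_bounds by (auto simp: M_def)
    have tM: "tau * M > 0" using tau M by simp
    obtain n1 where n1: "\<And>k. k \<ge> n1 \<Longrightarrow> norm (w (K k) - wbar) < 1"
      using LIMSEQ_D[OF wK, of 1] by auto
    obtain n2 where n2: "\<And>k. k \<ge> n2 \<Longrightarrow> norm (w (Suc (K k)) - w (K k) - 0) < \<epsilon> / (tau * M)"
      using LIMSEQ_D[OF dK, of "\<epsilon> / (tau * M)"] \<epsilon> tM by auto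
    show "\<exists>no. \<forall>k\<ge>no. norm (gam (K k) *\<^sub>R (w (Suc (K k)) - w (K k)) - 0) < \<epsilon>"
    proof (intro exI[of _ "max n1 n2"] allI impI)
      fix k assume kn: "max n1 n2 \<le> k"
      define j where "j = K k"
      define dd where "dd = w (Suc j) - w j"
      have wb: "norm (w j - wbar) < 1" using n1 kn by (simp add: j_def)
      have ddsmall: "norm dd < \<epsilon> / (tau * M)" using n2 kn by (simp add: j_def dd_def)
      have gnorm: "norm (grad (w j)) \<le> G" using G(2) by (simp add: j_def)
      have main: "gam j * norm dd < \<epsilon>"
      proof (cases "gam j \<le> tau * M")
        case True
        have "gam j * norm dd \<le> tau * M * norm dd" by (rule mult_right_mono) (use True in auto)
        also have "tau * M * norm dd < tau * M * (\<epsilon> / (tau * M))"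
          using ddsmall tM by (intro mult_strict_left_mono) auto
        also have "\<dots> = \<epsilon>"
        proof -
          have tM0: "tau * M \<noteq> 0" using tau M(1) by simp
          thus ?thesis by simp
        qed
        finally show ?thesis .
      next
        case False
        hence big: "gam j > tau * M" by simp
        have "M < tau * M" using M tau by simp
        hence gmaxlt: "gmax < tau * M" using M by linarith
        have "ii j \<noteq> 1"
        proof
          assume "ii j = 1"
          hence "gam j = gam0 j" using gamdef[of j] by simp
          hence "gam j \<le> gmax" using gam0b[of j] by simp
          thus False using big gmaxlt by linarith
        qed
        hence ii2: "2 \<le> ii j" using ii1[of j] by linarith
        define i' where "i' = ii j - 1"
        have i': "1 \<le> i'" "i' < ii j" "i' \<le> ii j" using ii2 by (auto simp: i'_def)
        define gh where "gh = tau ^ (i' - 1) * gam0 j"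
        have "ii j - 1 = Suc (i' - 1)" using ii2 by (simp add: i'_def)
        hence gamj: "gam j = tau * gh" using gamdef[of j] by (simp add: gh_def)
        have gh_big: "gh > M" using big gamj tau by (simp add: mult_less_cancel_left_pos)
        have gh_pos: "gh > 0" using gh_big M by linarith
        define wh where "wh = wi j i'"
        define dh where "dh = wh - w j"
        have solh: "subproblem_sol phi grad D (w j) gh wh" using sols[of i' j] i' by (simp add: gh_def wh_def)
        have nacch: "\<not> accept phi grad m sig w j wh" using nacc[OF i'(1) i'(2)] by (simp add: wh_def)
        have "gh < gam j" using gamj gh_pos tau by simp
        hence dd_le: "norm dd \<le> norm dh"
          using sub_compare[OF solh solj[of j]] by (simp add: dd_def dh_def)
        have selfh: "grad (w j) \<bullet> dh + gh/2 * (norm dh)\<^sup>2 \<le> 0" using sub_self[OF solh wD] by (simp add: dh_def)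
        have "\<bar>grad (w j) \<bullet> dh\<bar> \<le> norm (grad (w j)) * norm dh" by (rule Cauchy_Schwarz_ineq2)
        also have "\<dots> \<le> G * norm dh" using gnorm by (rule mult_right_mono) simp
        finally have cs: "- (grad (w j) \<bullet> dh) \<le> G * norm dh" by linarith
        have dh_bound: "gh * norm dh \<le> 2 * G"
        proof (cases "dh = 0")
          case True thus ?thesis using G by simp
        next
          case False
          hence np: "norm dh > 0" by simp
          have "gh/2 * (norm dh)\<^sup>2 \<le> G * norm dh" using selfh cs by linarith
          hence "(gh/2 * norm dh) * norm dh \<le> G * norm dh" by (simp add: power2_eq_square mult.assoc)
          hence "gh/2 * norm dh \<le> G" using np by simp
          thus ?thesis by simp
        qed
        have dh_rho: "norm dh \<le> \<rho>"
        proof -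
          have "norm dh * (2*G/\<rho>) \<le> norm dh * gh" using M(3) gh_big by (intro mult_left_mono) auto
          also have "\<dots> \<le> 2 * G" using dh_bound by (simp add: mult.commute)
          finally have "norm dh * (2*G) / \<rho> \<le> 2 * G" by simp
          hence "norm dh * (2*G) \<le> 2 * G * \<rho>" using \<rho> by (simp add: pos_divide_le_eq)
          thus ?thesis using G by (simp add: mult.commute)
        qed
        have B\<xi>: "\<And>\<xi>. \<xi> \<in> cball (w j) \<rho> \<Longrightarrow> norm (grad \<xi> - grad (w j)) \<le> e'"
        proof -
          fix \<xi> assume x: "\<xi> \<in> cball (w j) \<rho>"
          hence dx: "dist (w j) \<xi> \<le> \<rho>" by simp
          have wjb: "w j \<in> cball wbar 2" using wb by (simp add: dist_norm norm_minus_commute)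
          have "dist wbar \<xi> \<le> dist wbar (w j) + dist (w j) \<xi>" by (rule dist_triangle)
          hence "\<xi> \<in> cball wbar 2" using wb dx \<rho> by (simp add: dist_norm norm_minus_commute)
          moreover have "dist \<xi> (w j) < \<delta>" using dx \<rho> by (simp add: dist_commute)
          ultimately have "dist (grad \<xi>) (grad (w j)) < e'" using Ug wjb by blast
          thus "norm (grad \<xi> - grad (w j)) \<le> e'" by (simp add: dist_norm)
        qed
        have lin: "\<bar>phi wh - phi (w j) - grad (w j) \<bullet> dh\<bar> \<le> norm dh * e'"
          using lin_bound[OF deriv B\<xi>, where b=wh] dh_rho by (simp add: dh_def)
        have finW: "finite ((\<lambda>r. phi (w (j - r))) ` {0..min j m})" by simp
        have "phi (w (j - 0)) \<in> (\<lambda>r. phi (w (j - r))) ` {0..min j m}" by (rule imageI) simp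
        hence phiPhi: "phi (w j) \<le> Max ((\<lambda>r. phi (w (j - r))) ` {0..min j m})"
          using Max_ge[OF finW] by simp
        have "phi wh > Max ((\<lambda>r. phi (w (j - r))) ` {0..min j m}) + sig * (grad (w j) \<bullet> (wh - w j))"
          using nacch unfolding accept_def by simp
        hence fail: "phi wh - phi (w j) > sig * (grad (w j) \<bullet> dh)" using phiPhi by (simp add: dh_def)
        define q where "q = - (grad (w j) \<bullet> dh)"
        have q: "gh/2 * (norm dh)\<^sup>2 \<le> q" using selfh by (simp add: q_def)
        have "sig * (- q) < - q + norm dh * e'" using fail lin by (simp add: q_def abs_le_iff)
        hence "(1 - sig) * q < norm dh * e'" by (simp add: algebra_simps)
        moreover have "(1 - sig) * (gh/2 * (norm dh)\<^sup>2) \<le> (1 - sig) * q" using q sig by (intro mult_left_mono) auto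
        ultimately have i0: "(1 - sig) * (gh/2 * (norm dh)\<^sup>2) < norm dh * e'" by linarith
        have eq: "((1 - sig) * gh / 2 * norm dh) * norm dh = (1 - sig) * (gh/2 * (norm dh)\<^sup>2)"
          by (simp add: power2_eq_square algebra_simps)
        have "norm dh * e' = e' * norm dh" by (rule mult.commute)
        hence ineq: "((1 - sig) * gh / 2 * norm dh) * norm dh < e' * norm dh" using i0 eq by linarith
        hence np: "norm dh > 0" using e' by (cases "norm dh = 0") auto
        hence ineq2: "(1 - sig) * gh / 2 * norm dh < e'" using ineq by simp
        have "gam j * norm dd \<le> gam j * norm dh" using dd_le gam_pos[of j] by (intro mult_left_mono) auto
        also have "\<dots> = (2 * tau / (1 - sig)) * ((1 - sig) * gh / 2 * norm dh)" using gamj sig by (simp add: field_simps)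
        also have "\<dots> < (2 * tau / (1 - sig)) * e'" using ineq2 tau sig by (intro mult_strict_left_mono) auto
        also have "\<dots> = \<epsilon> / 2" using tau sig by (simp add: e'_def field_simps)
        also have "\<dots> < \<epsilon>" using \<epsilon> by simp
        finally show ?thesis .
      qed
      show "norm (gam (K k) *\<^sub>R (w (Suc (K k)) - w (K k)) - 0) < \<epsilon>"
        using main gam_pos[of j] by (simp add: j_def dd_def)
    qed
  qed
  define gk where "gk k = gam (K k)" for k
  define pk where "pk k = w (Suc (K k))" for k
  define zk where "zk k = w (K k) - (1 / gk k) *\<^sub>R grad (w (K k))" for k
  define tk where "tk k = inverse (real (Suc k))" for k
  define ws where "ws k = pk k + tk k *\<^sub>R (zk k - pk k)" for k
  define vs where "vs k = (gk k / tk k) *\<^sub>R (ws k - pk k)" for k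
  have gk_pos: "\<And>k. gk k > 0" using gam_pos by (simp add: gk_def)
  have tk: "\<And>k. 0 < tk k" "\<And>k. tk k \<le> 1" by (auto simp: tk_def field_simps)
  have proj: "\<And>k. pk k \<in> proj_set D (zk k)"
    using sub_proj[OF solj gam_pos] by (simp add: pk_def zk_def gk_def)
  have proj2: "\<And>k. pk k \<in> proj_set D (ws k)"
    using proj_shrink[OF proj less_imp_le[OF tk(1)] tk(2)] by (simp add: ws_def)
  have vs_in: "\<And>k. vs k \<in> ray_cone ((\<lambda>p. ws k - p) ` proj_set D (ws k))"
  proof -
    fix k
    have "0 \<le> gk k / tk k" using gk_pos[of k] tk(1)[of k] by simp
    moreover have "ws k - pk k \<in> (\<lambda>p. ws k - p) ` proj_set D (ws k)" using proj2 by blast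
    ultimately show "vs k \<in> ray_cone ((\<lambda>p. ws k - p) ` proj_set D (ws k))"
      unfolding ray_cone_def vs_def by blast
  qed
  have vs_eq: "\<And>k. vs k = - (gk k *\<^sub>R (pk k - w (K k))) - grad (w (K k))"
  proof -
    fix k
    have t0: "tk k \<noteq> 0" using tk(1)[of k] by simp
    have g0: "gk k \<noteq> 0" using gk_pos[of k] by simp
    have "vs k = ((gk k / tk k) * tk k) *\<^sub>R (zk k - pk k)" by (simp add: vs_def ws_def)
    also have "\<dots> = gk k *\<^sub>R (zk k - pk k)" using t0 by simp
    also have "\<dots> = - (gk k *\<^sub>R (pk k - w (K k))) - (gk k * (1 / gk k)) *\<^sub>R grad (w (K k))"
      by (simp add: zk_def algebra_simps)
    also have "\<dots> = - (gk k *\<^sub>R (pk k - w (K k))) - grad (w (K k))" using g0 by simp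
    finally show "vs k = - (gk k *\<^sub>R (pk k - w (K k))) - grad (w (K k))" .
  qed
  have vs_lim: "vs \<longlonglongrightarrow> - grad wbar"
  proof -
    have "(\<lambda>k. - (gam (K k) *\<^sub>R (w (Suc (K k)) - w (K k))) - grad (w (K k))) \<longlonglongrightarrow> - 0 - grad wbar"
      by (intro tendsto_diff tendsto_minus G3 gK)
    moreover have "vs = (\<lambda>k. - (gam (K k) *\<^sub>R (w (Suc (K k)) - w (K k))) - grad (w (K k)))"
      by (rule ext) (simp add: vs_eq gk_def pk_def)
    ultimately show ?thesis by simp
  qed
  have pk_lim: "pk \<longlonglongrightarrow> wbar"
  proof -
    have "(\<lambda>k. w (K k) + (w (Suc (K k)) - w (K k))) \<longlonglongrightarrow> wbar + 0" by (intro tendsto_add wK dK)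
    thus ?thesis by (simp add: pk_def[abs_def])
  qed
  have tz: "(\<lambda>k. tk k *\<^sub>R (zk k - pk k)) \<longlonglongrightarrow> 0"
  proof (rule Lim_null_comparison)
    have "(\<lambda>k. tk k * (norm (pk k - w (K k)) + norm (grad (w (K k))) / gmin)) \<longlonglongrightarrow> 0 * (norm (0::'a) + norm (grad wbar) / gmin)"
      unfolding tk_def pk_def by (intro tendsto_intros LIMSEQ_inverse_real_of_nat dK gK) (use gam_bounds in simp)+
    thus "(\<lambda>k. tk k * (norm (pk k - w (K k)) + norm (grad (w (K k))) / gmin)) \<longlonglongrightarrow> 0" by simp
    show "\<forall>\<^sub>F k in sequentially. norm (tk k *\<^sub>R (zk k - pk k)) \<le> tk k * (norm (pk k - w (K k)) + norm (grad (w (K k))) / gmin)"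
    proof (rule always_eventually, rule allI)
      fix k
      have "zk k - pk k = - (pk k - w (K k)) - (1 / gk k) *\<^sub>R grad (w (K k))" by (simp add: zk_def algebra_simps)
      hence "norm (zk k - pk k) \<le> norm (pk k - w (K k)) + norm ((1 / gk k) *\<^sub>R grad (w (K k)))"
        by (metis norm_minus_cancel norm_triangle_ineq4)
      also have "norm ((1 / gk k) *\<^sub>R grad (w (K k))) = norm (grad (w (K k))) / gk k"
        using gk_pos[of k] by simp
      also have "\<dots> \<le> norm (grad (w (K k))) / gmin"
        using gam_ge[of "K k"] gam_bounds by (intro divide_left_mono) (auto simp: gk_def)
      finally have "norm (zk k - pk k) \<le> norm (pk k - w (K k)) + norm (grad (w (K k))) / gmin" by simp
      thus "norm (tk k *\<^sub>R (zk k - pk k)) \<le> tk k * (norm (pk k - w (K k)) + norm (grad (w (K k))) / gmin)"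
        using tk(1)[of k] by (simp add: mult_left_mono)
    qed
  qed
  have ws_lim: "ws \<longlonglongrightarrow> wbar"
  proof -
    have "(\<lambda>k. pk k + tk k *\<^sub>R (zk k - pk k)) \<longlonglongrightarrow> wbar + 0" by (intro tendsto_add pk_lim tz)
    thus ?thesis by (simp add: ws_def[abs_def])
  qed
  have "- grad wbar \<in> lim_normal_cone D wbar"
    unfolding lim_normal_cone_def using ws_lim vs_lim vs_in by blast
  moreover have "grad wbar + - grad wbar = 0" by simp
  ultimately show ?thesis using G3 by blast
qed


theorem mainTheorem5:
  fixes phi :: "'a::euclidean_space \<Rightarrow> real" and grad :: "'a \<Rightarrow> 'a"
    and D :: "'a set" and tau sig gmin gmax :: real and m :: nat
    and w :: "nat \<Rightarrow> 'a" and gam0 :: "nat \<Rightarrow> real" and wi :: "nat \<Rightarrow> nat \<Rightarrow> 'a"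
    and ii :: "nat \<Rightarrow> nat" and gam :: "nat \<Rightarrow> real"
    and K :: "nat \<Rightarrow> nat" and wbar :: 'a
  assumes deriv: "\<And>x. (phi has_derivative (\<lambda>h. grad x \<bullet> h)) (at x)"
    and grad_cont: "continuous_on UNIV grad"
    and D_ne: "D \<noteq> {}" and D_closed: "closed D"
    and tau: "tau > 1" and sig: "0 < sig" "sig < 1"
    and gam_bounds: "0 < gmin" "gmin \<le> gmax"
    and run: "spg_run phi grad D tau sig gmin gmax m w gam0 wi ii gam"
    and bdd: "\<exists>c. \<forall>x\<in>{x\<in>D. phi x \<le> phi (w 0)}. c \<le> phi x"
    and unif: "uniformly_continuous_on {x\<in>D. phi x \<le> phi (w 0)} phi"
    and K: "strict_mono K" and conv: "(w \<circ> K) \<longlonglongrightarrow> wbar"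
  shows "(\<exists>v\<in>lim_normal_cone D wbar. grad wbar + v = 0) \<and>
         ((\<lambda>k. gam (K k) *\<^sub>R (w (Suc (K k)) - w (K k))) \<longlonglongrightarrow> 0)"
proof -
  have dl: "(\<lambda>j. w (Suc j) - w j) \<longlonglongrightarrow> 0"
    by (rule part1[OF deriv grad_cont D_ne D_closed tau sig gam_bounds run bdd unif K conv])
  show ?thesis by (rule part2[OF deriv grad_cont tau sig gam_bounds run K conv dl])
qed

end
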